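(* For any function $g=g(\mathbf{x}_p)\in C^1(\mathbb{R}^{p+1},\mathbb{A})$ (depending only on $\mathbf{x}_p$) and any $k\in\mathbb{N}$: $$D_{\mathbf{x}_p}(\underline{\mathbf{x}}_q^{2k}g)=\underline{\mathbf{x}}_q^{2k}(D_{\mathbf{x}_p}g),\qquad D_{\mathbf{x}_p}(\underline{\mathbf{x}}_q^{2k+1}g)=\underline{\mathbf{x}}_q^{2k+1}(\overline{D}_{\mathbf{x}_p}g),$$ $$D_{\underline{\mathbf{x}}_q}(\underline{\mathbf{x}}_q^{2k}g)=-2k\,\underline{\mathbf{x}}_q^{2k-1}g,\qquad D_{\underline{\mathbf{x}}_q}(\underline{\mathbf{x}}_q^{2k+1}g)=-(2k+q)\,\underline{\mathbf{x}}_q^{2k}g.$$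
   Context: Let $\mathbb{A}$ be a real alternative algebra (the associator $[a,b,c]=(ab)c-a(bc)$ is an alternating trilinear function) with unity $1$, of finite real dimension $d>1$, equipped with an anti-involution $a\mapsto a^c$ (real linear, $a^c=a$ for real $a$, $(a^c)^c=a$, $(ab)^c=b^ca^c$). Let $t(x)=x+x^c$, $n(x)=xx^c$, $\mathbb{S}_{\mathbb{A}}=\{x: t(x)=0,\ n(x)=1\}$ (assumed nonempty) and $Q_{\mathbb{A}}=\mathbb{R}\cup\{x: t(x)\in\mathbb{R},\ n(x)\in\mathbb{R},\ 4n(x)>t(x)^2\}$. Let $M$ be a real subspace with $\mathbb{R}\subsetneq M\subseteq Q_{\mathbb{A}}$ having a basis $(v_0,\dots,v_m)$, $m\ge1$, $v_0=1$, $v_s\in\mathbb{S}_{\mathbb{A}}$, $v_sv_t=-v_tv_s$ for distinct $s,t\ge1$. Identify $x=\sum x_sv_s\in M$ with $(x_0,\dots,x_m)\in\mathbb{R}^{m+1}$; differentiate componentwise. Fix $p\in\{0,\dots,m-1\}$, $q=m-p$; $\mathbf{x}=\mathbf{x}_p+\underline{\mathbf{x}}_q$ with $\mathbf{x}_p=\sum_{s=0}^px_sv_s\in\mathbb{R}^{p+1}$, $\underline{\mathbf{x}}_q=\sum_{s=p+1}^m x_sv_s$; powers $\underline{\mathbf{x}}_q^j$ are taken in $\mathbb{A}$ (the term with $k=0$ in the third identity is $0$). $D_{\mathbf{x}_p}f=\sum_{s=0}^p v_s\partial_{x_s}f$, $\overline{D}_{\mathbf{x}_p}f=\partial_{x_0}f-\sum_{s=1}^pv_s\partial_{x_s}f$,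 $D_{\underline{\mathbf{x}}_q}f=\sum_{s=p+1}^mv_s\partial_{x_s}f$ (all acting on the left). *)

theory Defs
  imports "HOL-Analysis.Analysis"
begin

text \<open>The algebra A is modelled as a finite-dimensional real vector space 'a (class euclidean_space,
which only serves to give the canonical finite-dimensional topology) together with an
explicit bilinear multiplication mul, unity one and anti-involution cj.\<close>

definition associator :: "('a::real_vector \<Rightarrow> 'a \<Rightarrow> 'a) \<Rightarrow> 'a \<Rightarrow> 'a \<Rightarrow> 'a \<Rightarrow> 'a" where
  "associator mul a b c = mul (mul a b) c - mul a (mul b c)"

definition reals_in :: "'a::real_vector \<Rightarrow> 'a set" where
  "reals_in one = range (\<lambda>r. r *\<^sub>R one)"

definition alternative_algebra :: "('a::real_vector \<Rightarrow> 'a \<Rightarrow> 'a) \<Rightarrow> 'a \<Rightarrow> bool" where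
  "alternative_algebra mul one \<longleftrightarrow>
     bilinear mul \<and> (\<forall>x. mul one x = x \<and> mul x one = x) \<and>
     (\<forall>a b. associator mul a a b = 0 \<and> associator mul a b a = 0 \<and> associator mul b a a = 0)"

definition anti_involution :: "('a::real_vector \<Rightarrow> 'a \<Rightarrow> 'a) \<Rightarrow> 'a \<Rightarrow> ('a \<Rightarrow> 'a) \<Rightarrow> bool" where
  "anti_involution mul one cj \<longleftrightarrow>
     linear cj \<and> (\<forall>a\<in>reals_in one. cj a = a) \<and> (\<forall>a. cj (cj a) = a) \<and>
     (\<forall>a b. cj (mul a b) = mul (cj b) (cj a))"

definition trA :: "('a::real_vector \<Rightarrow> 'a) \<Rightarrow> 'a \<Rightarrow> 'a" where
  "trA cj x = x + cj x"

definition nA :: "('a::real_vector \<Rightarrow> 'a \<Rightarrow> 'a) \<Rightarrow> ('a \<Rightarrow> 'a) \<Rightarrow> 'a \<Rightarrow> 'a" where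
  "nA mul cj x = mul x (cj x)"

definition SA :: "('a::real_vector \<Rightarrow> 'a \<Rightarrow> 'a) \<Rightarrow> 'a \<Rightarrow> ('a \<Rightarrow> 'a) \<Rightarrow> 'a set" where
  "SA mul one cj = {x. trA cj x = 0 \<and> nA mul cj x = one}"

definition QA :: "('a::real_vector \<Rightarrow> 'a \<Rightarrow> 'a) \<Rightarrow> 'a \<Rightarrow> ('a \<Rightarrow> 'a) \<Rightarrow> 'a set" where
  "QA mul one cj = reals_in one \<union>
     {x. \<exists>t n::real. trA cj x = t *\<^sub>R one \<and> nA mul cj x = n *\<^sub>R one \<and> 4 * n > t ^ 2}"

text \<open>Powers in A (left-nested; A is power-associative).\<close>
fun powA :: "('a \<Rightarrow> 'a \<Rightarrow> 'a) \<Rightarrow> 'a \<Rightarrow> 'a \<Rightarrow> nat \<Rightarrow> 'a" where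
  "powA mul one a 0 = one"
| "powA mul one a (Suc n) = mul a (powA mul one a n)"

text \<open>Points of R^(m+1) are coordinate functions x :: nat => real (only x 0..x m matter).
  Partial derivative with respect to the s-th coordinate.\<close>
definition partial :: "((nat \<Rightarrow> real) \<Rightarrow> 'a::real_normed_vector) \<Rightarrow> nat \<Rightarrow> (nat \<Rightarrow> real) \<Rightarrow> 'a" where
  "partial f s x = vector_derivative (\<lambda>t. f (x(s := t))) (at (x s))"

definition Dp :: "('a \<Rightarrow> 'a \<Rightarrow> 'a) \<Rightarrow> (nat \<Rightarrow> 'a) \<Rightarrow> nat \<Rightarrow> ((nat \<Rightarrow> real) \<Rightarrow> 'a::real_normed_vector)
     \<Rightarrow> (nat \<Rightarrow> real) \<Rightarrow> 'a" where
  "Dp mul v p f x = (\<Sum>s\<in>{0..p}. mul (v s) (partial f s x))"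

definition Dpbar :: "('a \<Rightarrow> 'a \<Rightarrow> 'a) \<Rightarrow> (nat \<Rightarrow> 'a) \<Rightarrow> nat \<Rightarrow> ((nat \<Rightarrow> real) \<Rightarrow> 'a::real_normed_vector)
     \<Rightarrow> (nat \<Rightarrow> real) \<Rightarrow> 'a" where
  "Dpbar mul v p f x = partial f 0 x - (\<Sum>s\<in>{1..p}. mul (v s) (partial f s x))"

definition Dq :: "('a \<Rightarrow> 'a \<Rightarrow> 'a) \<Rightarrow> (nat \<Rightarrow> 'a) \<Rightarrow> nat \<Rightarrow> nat \<Rightarrow> ((nat \<Rightarrow> real) \<Rightarrow> 'a::real_normed_vector)
     \<Rightarrow> (nat \<Rightarrow> real) \<Rightarrow> 'a" where
  "Dq mul v p m f x = (\<Sum>s\<in>{p+1..m}. mul (v s) (partial f s x))"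

definition xq :: "(nat \<Rightarrow> 'a::real_vector) \<Rightarrow> nat \<Rightarrow> nat \<Rightarrow> (nat \<Rightarrow> real) \<Rightarrow> 'a" where
  "xq v p m x = (\<Sum>s\<in>{p+1..m}. x s *\<^sub>R v s)"

definition depends_only_on_p :: "nat \<Rightarrow> ((nat \<Rightarrow> real) \<Rightarrow> 'a) \<Rightarrow> bool" where
  "depends_only_on_p p g \<longleftrightarrow> (\<forall>x y. (\<forall>s\<le>p. x s = y s) \<longrightarrow> g x = g y)"

text \<open>C^1 on R^(p+1): all partial derivatives in x_0..x_p exist everywhere and are continuous
  (for functions depending only on x_0..x_p the product topology on nat => real induces the
  usual topology of R^(p+1)).\<close>
definition C1_p :: "nat \<Rightarrow> ((nat \<Rightarrow> real) \<Rightarrow> 'a::real_normed_vector) \<Rightarrow> bool" where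
  "C1_p p g \<longleftrightarrow>
     (\<forall>s\<le>p. \<forall>x. (\<lambda>t. g (x(s := t))) differentiable (at (x s))) \<and>
     (\<forall>s\<le>p. continuous_on UNIV (partial g s))"

end

theory Submission
  imports Defs
begin

lemma mul_sum_right: "bilinear mul \<Longrightarrow> mul a (sum f S) = (\<Sum>i\<in>S. mul a (f i))"
  by (induct S rule: infinite_finite_induct) (simp_all add: bilinear_radd bilinear_rzero)
lemma mul_sum_left: "bilinear mul \<Longrightarrow> mul (sum f S) a = (\<Sum>i\<in>S. mul (f i) a)"
  by (induct S rule: infinite_finite_induct) (simp_all add: bilinear_ladd bilinear_lzero)

lemma sum_upd:
  fixes f :: "nat \<Rightarrow> real \<Rightarrow> 'b::ab_group_add"
  assumes "finite I" "s \<in> I"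
  shows "(\<Sum>j\<in>I. f j ((x(s:=t)) j)) = (\<Sum>j\<in>I. f j (x j)) + (f s t - f s (x s))"
proof -
  have "(\<Sum>j\<in>I. f j ((x(s:=t)) j)) = f s t + (\<Sum>j\<in>I-{s}. f j ((x(s:=t)) j))"
    using sum.remove[OF assms, of "\<lambda>j. f j ((x(s:=t)) j)"] by simp
  also have "(\<Sum>j\<in>I-{s}. f j ((x(s:=t)) j)) = (\<Sum>j\<in>I-{s}. f j (x j))"
    by (rule sum.cong) auto
  also have "(\<Sum>j\<in>I. f j (x j)) = f s (x s) + (\<Sum>j\<in>I-{s}. f j (x j))"
    using sum.remove[OF assms, of "\<lambda>j. f j (x j)"] by simp
  ultimately show ?thesis by (simp add: algebra_simps)
qed

lemma dphi: "((\<lambda>t. (-(a + (t^2 - b)))^k) has_real_derivative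
   (real k * (-(a + (c^2 - b)))^(k-1) * (-(2*c)))) (at c)"
  by (auto intro!: derivative_eq_intros)

lemma assoc_lin:
  assumes bl: "bilinear mul" and alt: "\<forall>a b. associator mul a a b = 0"
  shows "associator mul a b c = - associator mul b a c"
proof -
  have "associator mul (a+b) (a+b) c = associator mul a a c + associator mul a b c
     + associator mul b a c + associator mul b b c"
    unfolding associator_def by (simp add: bilinear_ladd[OF bl] bilinear_radd[OF bl] algebra_simps)
  with alt show ?thesis by (simp add: eq_neg_iff_add_eq_0)
qed

definition Rq :: "nat \<Rightarrow> nat \<Rightarrow> (nat \<Rightarrow> real) \<Rightarrow> real" where
  "Rq p m y = (\<Sum>s\<in>{p+1..m}. (y s)^2)"

locale ctx =
  fixes mul :: "'a::euclidean_space \<Rightarrow> 'a \<Rightarrow> 'a" and one :: 'a and v :: "nat \<Rightarrow> 'a" and p m :: nat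
  assumes bl: "bilinear mul"
  and lone: "\<And>x. mul one x = x"
  and rone: "\<And>x. mul x one = x"
  and lalt: "\<And>a b. mul (mul a a) b = mul a (mul a b)"
  and alin: "\<And>a b c. associator mul a b c = - associator mul b a c"
  and vv: "\<And>s. s \<in> {1..m} \<Longrightarrow> mul (v s) (v s) = - one"
  and anti: "\<And>s t. s\<in>{1..m} \<Longrightarrow> t\<in>{1..m} \<Longrightarrow> s\<noteq>t \<Longrightarrow> mul (v s) (v t) = - mul (v t) (v s)"
  and v0: "v 0 = one"
  and pm: "p < m"
begin

lemmas bls = bilinear_ladd[OF bl] bilinear_radd[OF bl] bilinear_lmul[OF bl] bilinear_rmul[OF bl]
  bilinear_lneg[OF bl] bilinear_rneg[OF bl] bilinear_lzero[OF bl] bilinear_rzero[OF bl]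
  bilinear_lsub[OF bl] bilinear_rsub[OF bl] mul_sum_left[OF bl] mul_sum_right[OF bl]

lemma vvh: "s \<in> {1..m} \<Longrightarrow> mul (v s) (mul (v s) h) = - h"
  using lalt[of "v s" h] vv[of s] by (simp add: bls lone)

lemma anticomm: assumes "mul a b = - mul b a" shows "mul a (mul b h) = - mul b (mul a h)"
proof -
  have "mul (mul a b) h - mul a (mul b h) = - (mul (mul b a) h - mul b (mul a h))"
    using alin[of a b h] by (simp add: associator_def)
  with assms have "- mul a (mul b h) = mul b (mul a h)" by (simp add: bls algebra_simps)
  then show ?thesis by (metis minus_minus)
qed

abbreviation X where "X y \<equiv> xq v p m y"

lemma sumX: "(\<Sum>s\<in>{p+1..m}. y s *\<^sub>R mul (v s) h) = mul (X y) h"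
  by (simp add: xq_def bls)

lemma vX: assumes "s \<in> {1..p}" shows "mul (v s) (X y) = - mul (X y) (v s)"
proof -
  have "mul (v s) (X y) = (\<Sum>t\<in>{p+1..m}. y t *\<^sub>R mul (v s) (v t))" by (simp add: xq_def bls)
  also have "\<dots> = (\<Sum>t\<in>{p+1..m}. - (y t *\<^sub>R mul (v t) (v s)))"
  proof (rule sum.cong[OF refl])
    fix t assume "t \<in> {p+1..m}"
    then have "s \<in> {1..m}" "t \<in> {1..m}" "s \<noteq> t" using assms pm by auto
    from anti[OF this] show "y t *\<^sub>R mul (v s) (v t) = - (y t *\<^sub>R mul (v t) (v s))" by simp
  qed
  also have "\<dots> = - mul (X y) (v s)" by (simp add: xq_def bls sum_negf)
  finally show ?thesis .
qed

lemma antiX: "s \<in> {1..p} \<Longrightarrow> mul (v s) (mul (X y) h) = - mul (X y) (mul (v s) h)"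
  by (rule anticomm) (rule vX)

lemma XX: "mul (X y) (X y) = - Rq p m y *\<^sub>R one"
proof -
  define I where "I = {p+1..m}"
  define f where "f s t = (y s * y t) *\<^sub>R mul (v t) (v s)" for s t
  have S: "mul (X y) (X y) = (\<Sum>s\<in>I. \<Sum>t\<in>I. f s t)"
    by (simp add: xq_def bls f_def I_def scaleR_sum_right)
  have sw: "(\<Sum>s\<in>I. \<Sum>t\<in>I. f s t) = (\<Sum>s\<in>I. \<Sum>t\<in>I. f t s)" by (rule sum.swap)
  have "(\<Sum>s\<in>I. \<Sum>t\<in>I. f s t) + (\<Sum>s\<in>I. \<Sum>t\<in>I. f t s) = (\<Sum>s\<in>I. \<Sum>t\<in>I. f s t + f t s)"
    by (simp add: sum.distrib)
  also have "\<dots> = (\<Sum>s\<in>I. \<Sum>t\<in>I. if t = s then 2 *\<^sub>R f s s else 0)"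
  proof (intro sum.cong refl)
    fix s t assume "s \<in> I" "t \<in> I"
    then have st: "s \<in> {1..m}" "t \<in> {1..m}" by (auto simp: I_def)
    show "f s t + f t s = (if t = s then 2 *\<^sub>R f s s else 0)"
    proof (cases "t = s")
      case True then show ?thesis by (simp add: scaleR_2)
    next
      case False
      then have "f t s = - f s t" using anti[OF st] by (simp add: f_def mult.commute)
      then show ?thesis using False by simp
    qed
  qed
  also have "\<dots> = (\<Sum>s\<in>I. 2 *\<^sub>R f s s)" by (simp add: I_def)
  also have "\<dots> = (\<Sum>s\<in>I. (- 2 * (y s)^2) *\<^sub>R one)"
  proof (rule sum.cong[OF refl])
    fix s assume "s \<in> I"
    then have "mul (v s) (v s) = - one" using vv by (auto simp: I_def)
    then show "2 *\<^sub>R f s s = (- 2 * (y s)^2) *\<^sub>R one" by (simp add: f_def power2_eq_square)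
  qed
  also have "\<dots> = (- 2 * Rq p m y) *\<^sub>R one"
    by (simp add: Rq_def I_def scaleR_sum_left sum_distrib_left)
  finally have "mul (X y) (X y) + mul (X y) (X y) = (- 2 * Rq p m y) *\<^sub>R one"
    using S sw by simp
  then have "2 *\<^sub>R mul (X y) (X y) = 2 *\<^sub>R (- Rq p m y *\<^sub>R one)" by (simp add: scaleR_2)
  then show ?thesis by (metis scaleR_cancel_left zero_neq_numeral)
qed

lemma powX: "powA mul one (X y) (2*k) = (- Rq p m y)^k *\<^sub>R one \<and>
   powA mul one (X y) (2*k+1) = (- Rq p m y)^k *\<^sub>R X y"
proof (induct k)
  case 0 then show ?case by (simp add: rone)
next
  case (Suc k)
  have e: "powA mul one (X y) (2*Suc k) = (- Rq p m y)^(Suc k) *\<^sub>R one"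
  proof -
    have "powA mul one (X y) (2*Suc k) = mul (X y) (mul (X y) (powA mul one (X y) (2*k)))"
      by (simp add: numeral_2_eq_2)
    also have "\<dots> = mul (mul (X y) (X y)) (powA mul one (X y) (2*k))" by (simp add: lalt)
    also have "\<dots> = (- Rq p m y)^(Suc k) *\<^sub>R one" using Suc by (simp add: XX bls lone)
    finally show ?thesis .
  qed
  then show ?case by (simp add: bls rone)
qed


lemma bli: "bounded_linear (mul A)"
  using bl bilinear_conv_bounded_bilinear bounded_bilinear.bounded_linear_right by blast

lemma partial_low:
  assumes "s \<le> p" "(\<lambda>t. g (x(s:=t))) differentiable (at (x s))"
  shows "partial (\<lambda>y. mul (powA mul one (X y) n) (g y)) s x = mul (powA mul one (X x) n) (partial g s x)"
proof -
  have XE: "X (x(s:=t)) = X x" for t unfolding xq_def using assms(1) by (intro sum.cong) auto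
  have "((\<lambda>t. g (x(s:=t))) has_vector_derivative partial g s x) (at (x s))"
    using assms(2) unfolding partial_def vector_derivative_works .
  then have "((\<lambda>t. mul (powA mul one (X x) n) (g (x(s:=t)))) has_vector_derivative
      mul (powA mul one (X x) n) (partial g s x)) (at (x s))"
    by (rule bounded_linear.has_vector_derivative[OF bli])
  then show ?thesis unfolding partial_def XE by (simp add: vector_derivative_at)
qed

lemma RE: "s \<in> {p+1..m} \<Longrightarrow> Rq p m (x(s:=t)) = Rq p m x + (t^2 - (x s)^2)"
  unfolding Rq_def using sum_upd[of "{p+1..m}" s "\<lambda>j a. a^2" x t] by simp

lemma XE: "s \<in> {p+1..m} \<Longrightarrow> X (x(s:=t)) = X x + (t - x s) *\<^sub>R v s"
  unfolding xq_def using sum_upd[of "{p+1..m}" s "\<lambda>j a. a *\<^sub>R v j" x t]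
  by (simp add: algebra_simps)

lemma partial_even:
  assumes "s \<in> {p+1..m}" "\<And>t. g (x(s:=t)) = g x"
  shows "partial (\<lambda>y. mul (powA mul one (X y) (2*k)) (g y)) s x
     = (real k * (- Rq p m x)^(k-1) * (-(2 * x s))) *\<^sub>R g x"
proof -
  have F: "(\<lambda>t. mul (powA mul one (X (x(s:=t))) (2*k)) (g (x(s:=t))))
     = (\<lambda>t. (-(Rq p m x + (t^2 - (x s)^2)))^k *\<^sub>R g x)"
    by (rule ext) (simp add: powX RE[OF assms(1)] assms(2) bls lone)
  have "((\<lambda>t. (-(Rq p m x + (t^2 - (x s)^2)))^k *\<^sub>R g x) has_vector_derivative
     (real k * (- Rq p m x)^(k-1) * (-(2 * x s))) *\<^sub>R g x) (at (x s))"
    using has_vector_derivative_scaleR[OF dphi[of "Rq p m x" "(x s)^2" k "x s"] has_vector_derivative_const[of "g x"]]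
    by simp
  then show ?thesis unfolding partial_def F by (rule vector_derivative_at)
qed

lemma partial_odd:
  assumes "s \<in> {p+1..m}" "\<And>t. g (x(s:=t)) = g x"
  shows "partial (\<lambda>y. mul (powA mul one (X y) (2*k+1)) (g y)) s x
     = (- Rq p m x)^k *\<^sub>R mul (v s) (g x) + (real k * (- Rq p m x)^(k-1) * (-(2 * x s))) *\<^sub>R mul (X x) (g x)"
proof -
  have F: "(\<lambda>t. mul (powA mul one (X (x(s:=t))) (2*k+1)) (g (x(s:=t))))
     = (\<lambda>t. (-(Rq p m x + (t^2 - (x s)^2)))^k *\<^sub>R (mul (X x) (g x) + (t - x s) *\<^sub>R mul (v s) (g x)))"
  proof (rule ext)
    fix t
    have P: "powA mul one (X (x(s:=t))) (2*k+1) = (-Rq p m (x(s:=t)))^k *\<^sub>R X (x(s:=t))"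
      using powX by blast
    show "mul (powA mul one (X (x(s:=t))) (2*k+1)) (g (x(s:=t)))
     = (-(Rq p m x + (t^2 - (x s)^2)))^k *\<^sub>R (mul (X x) (g x) + (t - x s) *\<^sub>R mul (v s) (g x))"
      unfolding P by (simp add: RE[OF assms(1)] XE[OF assms(1)] assms(2) bls)
  qed
  have I: "((\<lambda>t. mul (X x) (g x) + (t - x s) *\<^sub>R mul (v s) (g x)) has_vector_derivative mul (v s) (g x)) (at (x s))"
    by (auto intro!: derivative_eq_intros)
  have "((\<lambda>t. (-(Rq p m x + (t^2 - (x s)^2)))^k *\<^sub>R (mul (X x) (g x) + (t - x s) *\<^sub>R mul (v s) (g x))) has_vector_derivative
     (- Rq p m x)^k *\<^sub>R mul (v s) (g x) + (real k * (- Rq p m x)^(k-1) * (-(2 * x s))) *\<^sub>R mul (X x) (g x)) (at (x s))"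
    using has_vector_derivative_scaleR[OF dphi[of "Rq p m x" "(x s)^2" k "x s"] I]
    by simp
  then show ?thesis unfolding partial_def F by (rule vector_derivative_at)
qed

end

theorem lemma3p8:
  fixes mul :: "'a::euclidean_space \<Rightarrow> 'a \<Rightarrow> 'a" and one :: 'a and cj :: "'a \<Rightarrow> 'a"
    and v :: "nat \<Rightarrow> 'a" and m p k :: nat and g :: "(nat \<Rightarrow> real) \<Rightarrow> 'a"
  assumes alg: "alternative_algebra mul one"
    and dim: "DIM('a) > 1"
    and inv: "anti_involution mul one cj"
    and S_ne: "SA mul one cj \<noteq> {}"
    and m1: "m \<ge> 1"
    and v_inj: "inj_on v {0..m}"
    and v_indep: "independent (v ` {0..m})"
    and v0: "v 0 = one"
    and vS: "\<forall>s\<in>{1..m}. v s \<in> SA mul one cj"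
    and v_anti: "\<forall>s\<in>{1..m}. \<forall>t\<in>{1..m}. s \<noteq> t \<longrightarrow> mul (v s) (v t) = - mul (v t) (v s)"
    and M_Q: "span (v ` {0..m}) \<subseteq> QA mul one cj"
    and p_lt: "p < m"
    and g_dep: "depends_only_on_p p g"
    and g_C1: "C1_p p g"
  shows "(\<forall>x. Dp mul v p (\<lambda>y. mul (powA mul one (xq v p m y) (2*k)) (g y)) x
              = mul (powA mul one (xq v p m x) (2*k)) (Dp mul v p g x))
       \<and> (\<forall>x. Dp mul v p (\<lambda>y. mul (powA mul one (xq v p m y) (2*k+1)) (g y)) x
              = mul (powA mul one (xq v p m x) (2*k+1)) (Dpbar mul v p g x))
       \<and> (\<forall>x. Dq mul v p m (\<lambda>y. mul (powA mul one (xq v p m y) (2*k)) (g y)) x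
              = - (real (2*k)) *\<^sub>R mul (powA mul one (xq v p m x) (2*k - 1)) (g x))
       \<and> (\<forall>x. Dq mul v p m (\<lambda>y. mul (powA mul one (xq v p m y) (2*k+1)) (g y)) x
              = - (real (2*k + (m - p))) *\<^sub>R mul (powA mul one (xq v p m x) (2*k)) (g x))"
proof -
  have bl: "bilinear mul" and lone: "\<And>x. mul one x = x" and rone: "\<And>x. mul x one = x"
    and aa: "\<forall>a b. associator mul a a b = 0"
    using alg unfolding alternative_algebra_def by auto
  have lalt: "mul (mul a a) b = mul a (mul a b)" for a b
    using aa unfolding associator_def by auto
  have vv: "mul (v s) (v s) = - one" if "s \<in> {1..m}" for s
  proof -
    have "v s \<in> SA mul one cj" using vS that by blast
    then have "cj (v s) = - v s" "mul (v s) (cj (v s)) = one"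
      unfolding SA_def trA_def nA_def by (auto simp: eq_neg_iff_add_eq_0 add.commute)
    then show ?thesis by (simp add: bilinear_rneg[OF bl]) (metis minus_minus)
  qed
  interpret C: ctx mul one v p m
  proof (rule ctx.intro)
    show "\<And>s t. s\<in>{1..m} \<Longrightarrow> t\<in>{1..m} \<Longrightarrow> s\<noteq>t \<Longrightarrow> mul (v s) (v t) = - mul (v t) (v s)"
      using v_anti by blast
  qed (fact bl lone rone lalt assoc_lin[OF bl aa] vv v0 p_lt)+
  let ?I = "{p+1..m}"
  have gh: "g (x(s:=t)) = g x" if "s \<in> ?I" for x s t
    using g_dep that unfolding depends_only_on_p_def by auto
  have gd: "(\<lambda>t. g (x(s:=t))) differentiable (at (x s))" if "s \<le> p" for x s
    using g_C1 that unfolding C1_p_def by auto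
  note bls = C.bls
  have c1: "Dp mul v p (\<lambda>y. mul (powA mul one (xq v p m y) (2*k)) (g y)) x
              = mul (powA mul one (xq v p m x) (2*k)) (Dp mul v p g x)" for x
  proof -
    have "Dp mul v p (\<lambda>y. mul (powA mul one (xq v p m y) (2*k)) (g y)) x
       = (\<Sum>s\<in>{0..p}. (- Rq p m x)^k *\<^sub>R mul (v s) (partial g s x))"
      unfolding Dp_def
    proof (rule sum.cong[OF refl])
      fix s assume "s \<in> {0..p}" then have s: "s \<le> p" by simp
      show "mul (v s) (partial (\<lambda>y. mul (powA mul one (xq v p m y) (2*k)) (g y)) s x) =
        (- Rq p m x)^k *\<^sub>R mul (v s) (partial g s x)"
        unfolding C.partial_low[OF s gd[OF s]] by (simp add: C.powX bls lone)
    qed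
    also have "\<dots> = mul (powA mul one (xq v p m x) (2*k)) (Dp mul v p g x)"
      by (simp add: C.powX Dp_def bls lone scaleR_sum_right)
    finally show ?thesis .
  qed
  have c2: "Dp mul v p (\<lambda>y. mul (powA mul one (xq v p m y) (2*k+1)) (g y)) x
              = mul (powA mul one (xq v p m x) (2*k+1)) (Dpbar mul v p g x)" for x
  proof -
    let ?c = "(- Rq p m x)^k"
    have "Dp mul v p (\<lambda>y. mul (powA mul one (xq v p m y) (2*k+1)) (g y)) x
       = (\<Sum>s\<in>{0..p}. mul (v s) (?c *\<^sub>R mul (xq v p m x) (partial g s x)))"
      unfolding Dp_def
    proof (rule sum.cong[OF refl])
      fix s assume "s \<in> {0..p}" then have s: "s \<le> p" by simp
      show "mul (v s) (partial (\<lambda>y. mul (powA mul one (xq v p m y) (2*k+1)) (g y)) s x) =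
        mul (v s) (?c *\<^sub>R mul (xq v p m x) (partial g s x))"
        unfolding C.partial_low[OF s gd[OF s]] by (simp add: C.powX bls rone)
    qed
    also have "\<dots> = ?c *\<^sub>R mul (xq v p m x) (partial g 0 x) +
        (\<Sum>s\<in>{1..p}. mul (v s) (?c *\<^sub>R mul (xq v p m x) (partial g s x)))"
      by (simp add: sum.atLeast_Suc_atMost v0 lone)
    also have "(\<Sum>s\<in>{1..p}. mul (v s) (?c *\<^sub>R mul (xq v p m x) (partial g s x)))
       = (\<Sum>s\<in>{1..p}. - (?c *\<^sub>R mul (xq v p m x) (mul (v s) (partial g s x))))"
      by (rule sum.cong[OF refl]) (simp add: bls C.antiX)
    finally have E: "Dp mul v p (\<lambda>y. mul (powA mul one (xq v p m y) (2*k+1)) (g y)) x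
       = ?c *\<^sub>R mul (xq v p m x) (partial g 0 x) +
        (\<Sum>s\<in>{1..p}. - (?c *\<^sub>R mul (xq v p m x) (mul (v s) (partial g s x))))" .
    have P: "powA mul one (xq v p m x) (2*k+1) = ?c *\<^sub>R xq v p m x" using C.powX by blast
    show ?thesis unfolding E P Dpbar_def
      by (simp add: bls scaleR_sum_right sum_negf algebra_simps)
  qed
  have c3: "Dq mul v p m (\<lambda>y. mul (powA mul one (xq v p m y) (2*k)) (g y)) x
              = - (real (2*k)) *\<^sub>R mul (powA mul one (xq v p m x) (2*k - 1)) (g x)" for x
  proof -
    have "Dq mul v p m (\<lambda>y. mul (powA mul one (xq v p m y) (2*k)) (g y)) x
       = (\<Sum>s\<in>?I. (real k * (- Rq p m x)^(k-1) * (-2)) *\<^sub>R (x s *\<^sub>R mul (v s) (g x)))"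
      unfolding Dq_def by (rule sum.cong[OF refl]) (simp add: C.partial_even gh bls)
    also have "\<dots> = (real k * (- Rq p m x)^(k-1) * (-2)) *\<^sub>R mul (xq v p m x) (g x)"
      by (simp only: C.sumX[symmetric] scaleR_sum_right)
    also have "\<dots> = - (real (2*k)) *\<^sub>R mul (powA mul one (xq v p m x) (2*k - 1)) (g x)"
    proof (cases k)
      case 0 then show ?thesis by simp
    next
      case (Suc j)
      then have K: "2*k - 1 = 2*j+1" by simp
      have P: "powA mul one (xq v p m x) (2*j+1) = (- Rq p m x)^j *\<^sub>R xq v p m x" using C.powX by blast
      show ?thesis unfolding K P using Suc by (simp add: bls algebra_simps)
    qed
    finally show ?thesis .
  qed
  have c4: "Dq mul v p m (\<lambda>y. mul (powA mul one (xq v p m y) (2*k+1)) (g y)) x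
              = - (real (2*k + (m - p))) *\<^sub>R mul (powA mul one (xq v p m x) (2*k)) (g x)" for x
  proof -
    let ?c = "(- Rq p m x)^k" and ?d = "real k * (- Rq p m x)^(k-1) * (-2)"
    have P: "powA mul one (xq v p m x) (2*k) = ?c *\<^sub>R one" using C.powX by blast
    have "Dq mul v p m (\<lambda>y. mul (powA mul one (xq v p m y) (2*k+1)) (g y)) x
       = (\<Sum>s\<in>?I. (- (?c *\<^sub>R g x)) + ?d *\<^sub>R (x s *\<^sub>R mul (v s) (mul (xq v p m x) (g x))))"
      unfolding Dq_def
    proof (rule sum.cong[OF refl])
      fix s assume s: "s \<in> ?I"
      then have s1: "s \<in> {1..m}" by auto
      have G: "g (x(s:=t)) = g x" for t using gh[of s x t] s by blast
      have PO: "partial (\<lambda>y. mul (powA mul one (xq v p m y) (2*k+1)) (g y)) s x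
        = (- Rq p m x)^k *\<^sub>R mul (v s) (g x) + (real k * (- Rq p m x)^(k-1) * (-(2 * x s))) *\<^sub>R mul (xq v p m x) (g x)"
        by (rule C.partial_odd[OF s G])
      show "mul (v s) (partial (\<lambda>y. mul (powA mul one (xq v p m y) (2*k+1)) (g y)) s x)
        = (- (?c *\<^sub>R g x)) + ?d *\<^sub>R (x s *\<^sub>R mul (v s) (mul (xq v p m x) (g x)))"
        unfolding PO using s1 by (simp add: bls C.vvh)
    qed
    also have "\<dots> = - (real (m - p) * ?c) *\<^sub>R g x + ?d *\<^sub>R mul (xq v p m x) (mul (xq v p m x) (g x))"
    proof -
      have A1: "(\<Sum>s\<in>?I. - (?c *\<^sub>R g x)) = - (real (m - p) * ?c) *\<^sub>R g x"
        by (simp add: sum_negf sum_constant_scaleR)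
      have A2: "(\<Sum>s\<in>?I. ?d *\<^sub>R (x s *\<^sub>R mul (v s) (mul (xq v p m x) (g x))))
          = ?d *\<^sub>R mul (xq v p m x) (mul (xq v p m x) (g x))"
        by (simp only: C.sumX[symmetric] scaleR_sum_right)
      show ?thesis by (simp only: sum.distrib A1 A2)
    qed
    also have "\<dots> = - (real (m - p) * ?c) *\<^sub>R g x + (- 2 * real k * ?c) *\<^sub>R g x"
    proof -
      have XXg: "mul (xq v p m x) (mul (xq v p m x) (g x)) = - Rq p m x *\<^sub>R g x"
        using lalt[of "xq v p m x" "g x"] C.XX[of x] by (simp add: bls lone)
      have "?d * (- Rq p m x) = - 2 * real k * ?c"
      proof (cases k)
        case (Suc j)
        have "\<And>r::real. real (Suc j) * r^j * (-2) * r = -2 * real (Suc j) * (r * r^j)"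
          by (simp add: mult_ac)
        from this[of "- Rq p m x"] show ?thesis using Suc by (simp only: power_Suc diff_Suc_1)
      qed simp
      then show ?thesis by (simp only: XXg scaleR_scaleR)
    qed
    also have "- (real (m - p) * ?c) *\<^sub>R g x + (- 2 * real k * ?c) *\<^sub>R g x
       = - (real (2*k + (m - p))) *\<^sub>R mul (powA mul one (xq v p m x) (2*k)) (g x)"
    proof -
      have M: "mul (?c *\<^sub>R one) (g x) = ?c *\<^sub>R g x" by (simp add: bls lone)
      have N: "- (real (m - p) * ?c) + (- 2 * real k * ?c) = - (real (2*k + (m - p))) * ?c"
        by (simp add: algebra_simps)
      show ?thesis unfolding P M scaleR_scaleR scaleR_left_distrib[symmetric] N ..
    qed
    finally show ?thesis .
  qed
  show ?thesis by (intro conjI allI c1 c2 c3 c4)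
qed

end
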